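(* Let $n\ge 4$ and $1\le k<\frac{n}{2}$ be integers. If $n\neq 2k+1$, then $\mathrm{Aut}(B(n,k))=\{f_\sigma:\sigma\in \mathrm{Sym}([n])\}\cong \mathrm{Sym}([n])$. If $n=2k+1$, then $\mathrm{Aut}(B(n,k))=\{f_\sigma\alpha^i:\sigma\in\mathrm{Sym}([n]),\ i\in\{0,1\}\}\cong \mathrm{Sym}([n])\times\mathbb{Z}_2$, where $\mathbb{Z}_2$ is the cyclic group of order $2$.
   Context: For integers $n\ge 4$ and $1\le k<\frac n2$, let $[n]=\{1,\dots,n\}$. The graph $B(n,k)$ has vertex set $V=\{v\subset[n] : |v|\in\{k,k+1\}\}$, and two vertices $v,w$ are adjacent iff $v\subset w$ or $w\subset v$. For $\sigma\in\mathrm{Sym}([n])$, $f_\sigma:V\to V$ is $f_\sigma(v)=\{\sigma(x):x\in v\}$. When $n=2k+1$, $\alpha:V\to V$ is the complementation map $\alpha(v)=[n]\setminus v$. *)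

theory Defs
  imports "HOL-Algebra.Sym_Groups" "HOL-Algebra.Elementary_Groups" "HOL-Algebra.Bij"
begin

definition Bverts :: "nat \<Rightarrow> nat \<Rightarrow> nat set set" where
  "Bverts n k = {v. v \<subseteq> {1..n} \<and> (card v = k \<or> card v = k + 1)}"

definition Badj :: "nat set \<Rightarrow> nat set \<Rightarrow> bool" where
  "Badj v w \<longleftrightarrow> v \<subset> w \<or> w \<subset> v"

definition Baut :: "nat \<Rightarrow> nat \<Rightarrow> (nat set \<Rightarrow> nat set) set" where
  "Baut n k = {f \<in> Bij (Bverts n k).
     \<forall>v\<in>Bverts n k. \<forall>w\<in>Bverts n k. Badj v w \<longleftrightarrow> Badj (f v) (f w)}"

definition Baut_group :: "nat \<Rightarrow> nat \<Rightarrow> (nat set \<Rightarrow> nat set) monoid" where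
  "Baut_group n k = (BijGroup (Bverts n k)) \<lparr>carrier := Baut n k\<rparr>"

definition fsig :: "nat \<Rightarrow> nat \<Rightarrow> (nat \<Rightarrow> nat) \<Rightarrow> nat set \<Rightarrow> nat set" where
  "fsig n k \<sigma> = restrict (\<lambda>v. \<sigma> ` v) (Bverts n k)"

definition Balpha :: "nat \<Rightarrow> nat \<Rightarrow> nat set \<Rightarrow> nat set" where
  "Balpha n k = restrict (\<lambda>v. {1..n} - v) (Bverts n k)"

end

theory Submission
  imports Defs
begin

lemma swap_conn:
  assumes "finite U" "A \<subseteq> U" "B \<subseteq> U" "card A = card B" "P A"
    and step: "\<And>A a b. P A \<Longrightarrow> A \<subseteq> U \<Longrightarrow> a \<in> A \<Longrightarrow> b \<in> U - A \<Longrightarrow> P (insert b (A - {a}))"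
  shows "P B"
  using assms(2,4,5)
proof (induction "card (A - B)" arbitrary: A rule: less_induct)
  case less
  show ?case
  proof (cases "A - B = {}")
    case True
    then have "A \<subseteq> B" by blast
    then have "A = B" using less.prems assms(1,3) by (meson card_subset_eq finite_subset)
    then show ?thesis using less.prems by simp
  next
    case False
    then obtain a where a: "a \<in> A" "a \<notin> B" by blast
    have "\<not> B \<subseteq> A"
    proof
      assume "B \<subseteq> A"
      then have "B = A" using less.prems assms(1,3) card_subset_eq[of A B] finite_subset by metis
      then show False using a by simp
    qed
    then obtain b where b: "b \<in> B" "b \<notin> A" by blast
    define A' where "A' = insert b (A - {a})"
    have PA': "P A'" unfolding A'_def using step[OF less.prems(3) less.prems(1) a(1)] b assms(3) by blast
    have fA: "finite A" using less.prems(1) assms(1) finite_subset by blast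
    have cA': "card A' = card B" unfolding A'_def using less.prems(2) a b fA
      by (simp add: card_Diff_singleton) (metis a(1) card_0_eq empty_iff Suc_pred neq0_conv fA)
    have sub: "A' \<subseteq> U" unfolding A'_def using less.prems(1) b assms(3) by blast
    have eq: "A' - B = (A - B) - {a}" unfolding A'_def using b by blast
    have "card (A' - B) < card (A - B)" unfolding eq using a fA
      by (metis Diff_iff card_Diff1_less finite_Diff)
    then show ?thesis using less.hyps[OF _ sub cA' PA'] by blast
  qed
qed

lemma Bverts_iff: "v \<in> Bverts n k \<longleftrightarrow> v \<subseteq> {1..n} \<and> (card v = k \<or> card v = k + 1)"
  by (simp add: Bverts_def)

lemma Bverts_finite: "v \<in> Bverts n k \<Longrightarrow> finite v"
  by (auto simp: Bverts_def intro: finite_subset)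

lemma perm_image_sub: "\<sigma> permutes {1..n} \<Longrightarrow> v \<subseteq> {1..n} \<Longrightarrow> \<sigma> ` v \<subseteq> {1..n}"
  using permutes_image by blast

lemma perm_card: "\<sigma> permutes S \<Longrightarrow> card (\<sigma> ` v) = card v"
  by (meson card_image inj_on_subset permutes_inj subset_UNIV)

lemma fsig_mem: "\<sigma> permutes {1..n} \<Longrightarrow> v \<in> Bverts n k \<Longrightarrow> \<sigma> ` v \<in> Bverts n k"
  unfolding Bverts_iff using perm_image_sub[of \<sigma> n v] perm_card[of \<sigma> _ v] by metis

lemma fsig_app: "v \<in> Bverts n k \<Longrightarrow> fsig n k \<sigma> v = \<sigma> ` v"
  by (simp add: fsig_def)

lemma perm_image_compl:
  assumes "\<sigma> permutes {1..n}" "v \<subseteq> {1..n}"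
  shows "\<sigma> ` ({1..n} - v) = {1..n} - \<sigma> ` v"
proof -
  have "inj \<sigma>" using assms(1) permutes_inj by blast
  then have "\<sigma> ` ({1..n} - v) = \<sigma> ` {1..n} - \<sigma> ` v" by (simp add: image_set_diff)
  also have "\<sigma> ` {1..n} = {1..n}" using assms(1) permutes_image by blast
  finally show ?thesis .
qed

lemma fsig_Baut:
  assumes s: "\<sigma> permutes {1..n}"
  shows "fsig n k \<sigma> \<in> Baut n k"
proof -
  let ?V = "Bverts n k"
  have inj: "inj \<sigma>" using s permutes_inj by blast
  have si: "inv' \<sigma> permutes {1..n}" using s permutes_inv by blast
  have bij: "bij_betw (fsig n k \<sigma>) ?V ?V"
  proof (rule bij_betw_byWitness[where f'="\<lambda>v. inv' \<sigma> ` v"])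
    show "\<forall>a\<in>?V. inv' \<sigma> ` fsig n k \<sigma> a = a" using inj by (simp add: fsig_app image_inv_f_f)
    show "\<forall>a'\<in>?V. fsig n k \<sigma> (inv' \<sigma> ` a') = a'"
      using s si by (simp add: fsig_app fsig_mem image_f_inv_f permutes_surj)
    show "fsig n k \<sigma> ` ?V \<subseteq> ?V" using s by (auto simp: fsig_app fsig_mem)
    show "(\<lambda>v. inv' \<sigma> ` v) ` ?V \<subseteq> ?V" using si by (auto simp: fsig_mem)
  qed
  have adj: "\<forall>v\<in>?V. \<forall>w\<in>?V. Badj v w \<longleftrightarrow> Badj (fsig n k \<sigma> v) (fsig n k \<sigma> w)"
    using inj by (simp add: fsig_app Badj_def psubset_eq inj_image_subset_iff inj_image_eq_iff)
  show ?thesis unfolding Baut_def Bij_def using bij adj by (simp add: fsig_def)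
qed

lemma fsig_eqD:
  assumes s: "\<sigma> permutes {1..n}" and t: "\<tau> permutes {1..n}" and "k < n"
    and eq: "\<And>v. v \<in> Bverts n k \<Longrightarrow> \<sigma> ` v = \<tau> ` v"
  shows "\<sigma> = \<tau>"
proof
  fix x
  show "\<sigma> x = \<tau> x"
  proof (cases "x \<in> {1..n}")
    case False
    then show ?thesis using s t by (simp add: permutes_not_in)
  next
    case True
    have "k \<le> card ({1..n} - {x})" using True \<open>k < n\<close> by simp
    then obtain A where A: "A \<subseteq> {1..n} - {x}" "card A = k" using obtain_subset_with_card_n by metis
    have fA: "finite A" using A(1) finite_subset by blast
    have v1: "A \<in> Bverts n k" using A by (auto simp: Bverts_iff)
    have xA: "x \<notin> A" using A(1) by blast
    have v2: "insert x A \<in> Bverts n k" using A True fA xA by (auto simp: Bverts_iff)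
    have "\<sigma> x \<notin> \<sigma> ` A" using permutes_inj[OF s] xA by (simp add: inj_image_mem_iff)
    then have "\<sigma> ` insert x A - \<sigma> ` A = {\<sigma> x}" by auto
    moreover
    have "\<tau> x \<notin> \<tau> ` A" using permutes_inj[OF t] xA by (simp add: inj_image_mem_iff)
    then have "\<tau> ` insert x A - \<tau> ` A = {\<tau> x}" by auto
    ultimately show ?thesis using eq[OF v1] eq[OF v2] by (metis singleton_inject)
  qed
qed

lemma Balpha_app: "v \<in> Bverts n k \<Longrightarrow> Balpha n k v = {1..n} - v"
  by (simp add: Balpha_def)

lemma Balpha_mem: "n = 2*k+1 \<Longrightarrow> v \<in> Bverts n k \<Longrightarrow> {1..n} - v \<in> Bverts n k"
proof -
  assume n: "n = 2*k+1" and v: "v \<in> Bverts n k"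
  have sub: "v \<subseteq> {1..n}" and c: "card v = k \<or> card v = k + 1" using v by (auto simp: Bverts_iff)
  have "finite v" using sub finite_subset by blast
  then have "card ({1..n} - v) = n - card v" using sub by (simp add: card_Diff_subset)
  then show ?thesis using c n by (auto simp: Bverts_iff)
qed

lemma compl_psubset: "v \<subseteq> S \<Longrightarrow> w \<subseteq> S \<Longrightarrow> (S - v \<subset> S - w) = (w \<subset> v)"
  by auto

lemma Balpha_Baut:
  assumes n: "n = 2*k+1"
  shows "Balpha n k \<in> Baut n k"
proof -
  let ?V = "Bverts n k"
  have bij: "bij_betw (Balpha n k) ?V ?V"
  proof (rule bij_betw_byWitness[where f'="Balpha n k"])
    show "\<forall>a\<in>?V. Balpha n k (Balpha n k a) = a"
    proof
      fix a assume a: "a \<in> ?V"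
      have "Balpha n k (Balpha n k a) = {1..n} - ({1..n} - a)"
        using a Balpha_mem[OF n a] by (simp add: Balpha_app)
      also have "\<dots> = a" using a by (auto simp: Bverts_iff)
      finally show "Balpha n k (Balpha n k a) = a" .
    qed
    then show "\<forall>a'\<in>?V. Balpha n k (Balpha n k a') = a'" by blast
    show "Balpha n k ` ?V \<subseteq> ?V" using Balpha_mem[OF n] by (auto simp: Balpha_app)
    then show "Balpha n k ` ?V \<subseteq> ?V" .
  qed
  have adj: "\<forall>v\<in>?V. \<forall>w\<in>?V. Badj v w \<longleftrightarrow> Badj (Balpha n k v) (Balpha n k w)"
  proof (intro ballI)
    fix v w assume v: "v \<in> ?V" and w: "w \<in> ?V"
    have sv: "v \<subseteq> {1..n}" and sw: "w \<subseteq> {1..n}" using v w by (auto simp: Bverts_iff)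
    have "Badj v w \<longleftrightarrow> Badj ({1..n} - v) ({1..n} - w)"
      unfolding Badj_def using compl_psubset[OF sv sw] compl_psubset[OF sw sv] by blast
    then show "Badj v w \<longleftrightarrow> Badj (Balpha n k v) (Balpha n k w)" using v w by (simp add: Balpha_app)
  qed
  show ?thesis unfolding Baut_def Bij_def using bij adj by (simp add: Balpha_def)
qed

lemma compose_Baut:
  assumes "f \<in> Baut n k" "g \<in> Baut n k"
  shows "compose (Bverts n k) f g \<in> Baut n k"
proof -
  have fB: "f \<in> Bij (Bverts n k)" and gB: "g \<in> Bij (Bverts n k)" using assms by (auto simp: Baut_def)
  have gin: "\<And>v. v \<in> Bverts n k \<Longrightarrow> g v \<in> Bverts n k" using gB Bij_imp_funcset by blast
  show ?thesis using assms compose_Bij[OF fB gB] unfolding Baut_def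
    by (auto simp: compose_def gin)
qed

lemma sing_sub: "X \<subseteq> Y \<Longrightarrow> card Y = 1 \<Longrightarrow> r \<in> X \<Longrightarrow> Y = {r}"
  by (metis card_1_singletonE singletonD subsetD)

lemma level_pres_fsig:
  assumes f: "f \<in> Baut n k" and lev: "\<And>v. v \<in> Bverts n k \<Longrightarrow> card (f v) = card v"
    and k1: "1 \<le> k" and kn: "k + 2 \<le> n"
  shows "\<exists>\<sigma>. \<sigma> permutes {1..n} \<and> f = fsig n k \<sigma>"
proof -
  let ?V = "Bverts n k"
  let ?N = "{1..n::nat}"
  have fB: "f \<in> Bij ?V" using f by (simp add: Baut_def)
  have fV: "\<And>v. v \<in> ?V \<Longrightarrow> f v \<in> ?V" using fB Bij_imp_funcset by blast
  have finj: "inj_on f ?V" using fB by (simp add: Bij_def bij_betw_def)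
  have fext: "f \<in> extensional ?V" using fB by (simp add: Bij_def)
  have adj: "\<And>v w. v \<in> ?V \<Longrightarrow> w \<in> ?V \<Longrightarrow> Badj v w \<longleftrightarrow> Badj (f v) (f w)"
    using f by (simp add: Baut_def)
  have fsubN: "\<And>v. v \<in> ?V \<Longrightarrow> f v \<subseteq> ?N" using fV by (simp add: Bverts_iff)
  have finV: "\<And>v. v \<in> ?V \<Longrightarrow> finite v" by (rule Bverts_finite)
  have subp: "f A \<subset> f L" if A: "A \<subseteq> ?N" "card A = k" and L: "L \<subseteq> ?N" "card L = k + 1" and AL: "A \<subset> L" for A L
  proof -
    have AV: "A \<in> ?V" and LV: "L \<in> ?V" using A L by (auto simp: Bverts_iff)
    have "Badj (f A) (f L)" using adj[OF AV LV] AL by (simp add: Badj_def)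
    moreover have "\<not> f L \<subset> f A"
    proof
      assume "f L \<subset> f A"
      then have "card (f L) < card (f A)" using finV[OF fV[OF AV]] psubset_card_mono by blast
      then show False using lev[OF AV] lev[OF LV] A L by simp
    qed
    ultimately show ?thesis by (simp add: Badj_def)
  qed
  have subr: "A \<subset> L" if A: "A \<subseteq> ?N" "card A = k" and L: "L \<subseteq> ?N" "card L = k + 1" and AL: "f A \<subset> f L" for A L
  proof -
    have AV: "A \<in> ?V" and LV: "L \<in> ?V" using A L by (auto simp: Bverts_iff)
    have "Badj A L" using adj[OF AV LV] AL by (simp add: Badj_def)
    moreover have "\<not> L \<subset> A"
    proof
      assume "L \<subset> A"
      then have "card L < card A" using finV[OF AV] psubset_card_mono by blast
      then show False using A L by simp
    qed
    ultimately show ?thesis by (simp add: Badj_def)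
  qed
  define D where "D = (\<lambda>A x. f (insert x A) - f A)"
  have flag: "f A \<subset> f (insert x A) \<and> card (D A x) = 1"
    if A: "A \<subseteq> ?N" "card A = k" and x: "x \<in> ?N" "x \<notin> A" for A x
  proof -
    have fA: "finite A" using A(1) finite_subset by blast
    have L: "insert x A \<subseteq> ?N" "card (insert x A) = k + 1" using A x fA by auto
    have AV: "A \<in> ?V" and LV: "insert x A \<in> ?V" using A L by (auto simp: Bverts_iff)
    have ps: "f A \<subset> f (insert x A)" using subp[OF A L] x by blast
    have "card (D A x) = card (f (insert x A)) - card (f A)"
      unfolding D_def using ps finV[OF fV[OF AV]] by (simp add: card_Diff_subset)
    also have "\<dots> = 1" using lev[OF AV] lev[OF LV] A L by simp
    finally show ?thesis using ps by simp
  qed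
  have hex: "D (insert a C) x = D (insert b C) x"
    if C: "C \<subseteq> ?N" "card C = k - 1" and abx: "a \<in> ?N" "b \<in> ?N" "x \<in> ?N" "a \<notin> C" "b \<notin> C" "x \<notin> C"
      "a \<noteq> b" "a \<noteq> x" "b \<noteq> x" for C a b x
  proof -
    have fC: "finite C" using C(1) finite_subset by blast
    have cins: "card (insert y C) = k" if "y \<notin> C" for y
      using that C(2) fC k1 card_insert_disjoint[OF fC that] by simp
    have Ka: "insert a C \<subseteq> ?N" "card (insert a C) = k" using C abx cins by auto
    have Kb: "insert b C \<subseteq> ?N" "card (insert b C) = k" using C abx cins by auto
    have Kx: "insert x C \<subseteq> ?N" "card (insert x C) = k" using C abx cins by auto
    have VP: "insert a C \<in> ?V" "insert b C \<in> ?V" "insert x C \<in> ?V" using Ka Kb Kx by (auto simp: Bverts_iff)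
    define P where "P = f (insert a C)"
    define Q where "Q = f (insert b C)"
    define R where "R = f (insert x C)"
    have fl1: "P \<subset> f (insert x (insert a C)) \<and> card (D (insert a C) x) = 1"
      unfolding P_def using flag[OF Ka] abx by simp
    have fl2: "Q \<subset> f (insert x (insert b C)) \<and> card (D (insert b C) x) = 1"
      unfolding Q_def using flag[OF Kb] abx by simp
    have fl3: "P \<subset> f (insert b (insert a C))"
      unfolding P_def using flag[OF Ka] abx by simp
    have fl4: "Q \<subset> f (insert b (insert a C))"
      using flag[OF Kb, of a] abx unfolding Q_def by (simp add: insert_commute)
    have R1: "R \<subset> f (insert x (insert a C))"
      using flag[OF Kx, of a] abx unfolding R_def by (simp add: insert_commute)
    have R2: "R \<subset> f (insert x (insert b C))"
      using flag[OF Kx, of b] abx unfolding R_def by (simp add: insert_commute)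
    have L3: "insert b (insert a C) \<subseteq> ?N" "card (insert b (insert a C)) = k + 1"
      using Ka abx fC by auto
    have notR: "\<not> R \<subseteq> f (insert b (insert a C))"
    proof
      assume h: "R \<subseteq> f (insert b (insert a C))"
      have LV: "insert b (insert a C) \<in> ?V" using L3 by (auto simp: Bverts_iff)
      have "card R = k" unfolding R_def using lev[OF VP(3)] Kx by simp
      then have "R \<noteq> f (insert b (insert a C))" using lev[OF LV] L3 by auto
      then have "R \<subset> f (insert b (insert a C))" using h by blast
      then have "insert x C \<subset> insert b (insert a C)" using subr[OF Kx L3] unfolding R_def by blast
      then show False using abx by blast
    qed
    then obtain r where r: "r \<in> R" "r \<notin> P" "r \<notin> Q" using fl3 fl4 by blast
    have "D (insert a C) x = {r}"
      by (rule sing_sub[of "R - P"]) (use fl1 R1 r in \<open>auto simp: D_def P_def\<close>)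
    moreover have "D (insert b C) x = {r}"
      by (rule sing_sub[of "R - Q"]) (use fl2 R2 r in \<open>auto simp: D_def Q_def\<close>)
    ultimately show ?thesis by simp
  qed
  have const: "D A x = D B x"
    if x: "x \<in> ?N" and A: "A \<subseteq> ?N - {x}" "card A = k" and B: "B \<subseteq> ?N - {x}" "card B = k" for A B x
  proof -
    have "card B = k \<and> D B x = D A x"
    proof (rule swap_conn[where U="?N - {x}" and A=A and P="\<lambda>B. card B = k \<and> D B x = D A x"])
      show "finite (?N - {x})" by simp
      show "A \<subseteq> ?N - {x}" "B \<subseteq> ?N - {x}" "card A = card B" using A B by auto
      show "card A = k \<and> D A x = D A x" using A by simp
      fix A' a b assume P: "card A' = k \<and> D A' x = D A x" and A': "A' \<subseteq> ?N - {x}"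
        and a: "a \<in> A'" and b: "b \<in> ?N - {x} - A'"
      have fA': "finite A'" using A' finite_subset by blast
      define C where "C = A' - {a}"
      have C: "C \<subseteq> ?N" "card C = k - 1" using A' P a fA' unfolding C_def by auto
      have eqa: "insert a C = A'" using a unfolding C_def by blast
      have "D (insert a C) x = D (insert b C) x"
        by (rule hex[OF C]) (use A' a b x in \<open>auto simp: C_def\<close>)
      then have "D A' x = D (insert b C) x" using eqa by simp
      moreover have "card (insert b (A' - {a})) = k"
        using P a b fA' k1 by (simp add: card_Diff_singleton)
      ultimately show "card (insert b (A' - {a})) = k \<and> D (insert b (A' - {a})) x = D A x"
        using P unfolding C_def by simp
    qed
    then show ?thesis by simp
  qed
  have exK: "\<exists>A. A \<subseteq> ?N - {x} \<and> card A = k" if "x \<in> ?N" for x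
  proof -
    have "k \<le> card (?N - {x})" using that kn by simp
    then show ?thesis using obtain_subset_with_card_n by metis
  qed
  define \<sigma> where "\<sigma> = (\<lambda>x. if x \<in> ?N then the_elem (D (SOME A. A \<subseteq> ?N - {x} \<and> card A = k) x) else x)"
  have Dsig: "D A x = {\<sigma> x}" if x: "x \<in> ?N" and A: "A \<subseteq> ?N - {x}" "card A = k" for A x
  proof -
    define A0 where "A0 = (SOME A. A \<subseteq> ?N - {x} \<and> card A = k)"
    have A0: "A0 \<subseteq> ?N - {x}" "card A0 = k" using someI_ex[OF exK[OF x]] unfolding A0_def by auto
    have "card (D A0 x) = 1" using flag[of A0 x] A0 x by auto
    then obtain y where y: "D A0 x = {y}" by (rule card_1_singletonE)
    have "\<sigma> x = y" unfolding \<sigma>_def A0_def[symmetric] using x y by simp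
    then show ?thesis using const[OF x A A0] y by simp
  qed
  have fins: "f (insert x A) = insert (\<sigma> x) (f A)" if x: "x \<in> ?N" and A: "A \<subseteq> ?N - {x}" "card A = k" for A x
  proof -
    have "f A \<subset> f (insert x A)" using flag[of A x] A x by auto
    moreover have "f (insert x A) - f A = {\<sigma> x}" using Dsig[OF x A] by (simp add: D_def)
    ultimately show ?thesis by blast
  qed
  have sigN: "\<sigma> x \<in> ?N" if x: "x \<in> ?N" for x
  proof -
    obtain A where A: "A \<subseteq> ?N - {x}" "card A = k" using exK[OF x] by blast
    have fA: "finite A" using A finite_subset by blast
    have xA: "x \<notin> A" using A by blast
    have "insert x A \<in> ?V" using A x fA xA by (auto simp: Bverts_iff)
    then show ?thesis using fins[OF x A] fsubN by blast
  qed
  have sinj: "inj_on \<sigma> ?N"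
  proof (rule inj_onI)
    fix x y assume x: "x \<in> ?N" and y: "y \<in> ?N" and e: "\<sigma> x = \<sigma> y"
    show "x = y"
    proof (rule ccontr)
      assume xy: "x \<noteq> y"
      have "k \<le> card (?N - {x, y})" using x y kn xy by (simp add: card_Diff_subset)
      then obtain A where A: "A \<subseteq> ?N - {x, y}" "card A = k" using obtain_subset_with_card_n by metis
      have fA: "finite A" using A finite_subset by blast
      have Ax: "A \<subseteq> ?N - {x}" and Ay: "A \<subseteq> ?N - {y}" using A by auto
      have "f (insert x A) = f (insert y A)" using fins[OF x Ax A(2)] fins[OF y Ay A(2)] e by simp
      moreover have "x \<notin> A" "y \<notin> A" using A by auto
      then have "insert x A \<in> ?V" "insert y A \<in> ?V" using A x y fA by (auto simp: Bverts_iff)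
      ultimately have "insert x A = insert y A" using finj by (meson inj_onD)
      then show False using xy A by blast
    qed
  qed
  have sperm: "\<sigma> permutes ?N"
  proof (rule bij_imp_permutes)
    have "\<sigma> ` ?N \<subseteq> ?N" using sigN by blast
    then have "\<sigma> ` ?N = ?N" using endo_inj_surj[of ?N \<sigma>] sinj by blast
    then show "bij_betw \<sigma> ?N ?N" using sinj by (simp add: bij_betw_def)
    show "\<sigma> x = x" if "x \<notin> ?N" for x using that unfolding \<sigma>_def by (simp only: if_False)
  qed
  have fK: "f A = \<sigma> ` A" if A: "A \<subseteq> ?N" "card A = k" for A
  proof -
    have fA: "finite A" using A finite_subset by blast
    have AV: "A \<in> ?V" using A by (auto simp: Bverts_iff)
    have "k < card ?N" using kn by simp
    then have "A \<noteq> ?N" using A by auto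
    then obtain x where x: "x \<in> ?N" "x \<notin> A" using A by blast
    have sub: "\<sigma> ` A \<subseteq> f A"
    proof
      fix z assume "z \<in> \<sigma> ` A"
      then obtain y where y: "y \<in> A" "z = \<sigma> y" by blast
      define A' where "A' = insert x (A - {y})"
      have yN: "y \<in> ?N" using y A by blast
      have A': "A' \<subseteq> ?N - {y}" "card A' = k" using A x y fA k1 unfolding A'_def
        by (auto simp: card_Diff_singleton)
      have "insert y A' = insert x A" using y x unfolding A'_def by blast
      then have "\<sigma> y \<in> f (insert x A)" using fins[OF yN A'] by simp
      moreover have "f (insert x A) = insert (\<sigma> x) (f A)" using fins[of x A] x A by auto
      moreover have "\<sigma> y \<noteq> \<sigma> x" using sinj x yN y x by (metis inj_onD)
      ultimately show "z \<in> f A" using y by simp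
    qed
    moreover have "card (\<sigma> ` A) = card (f A)"
      using lev[OF AV] card_image[OF inj_on_subset[OF sinj A(1)]] by simp
    ultimately show ?thesis using card_subset_eq finV[OF fV[OF AV]] by metis
  qed
  have fall: "f v = \<sigma> ` v" if v: "v \<in> ?V" for v
  proof -
    have vN: "v \<subseteq> ?N" and c: "card v = k \<or> card v = k + 1" using v by (auto simp: Bverts_iff)
    show ?thesis
    proof (cases "card v = k")
      case True
      then show ?thesis using fK vN by simp
    next
      case False
      then have c1: "card v = k + 1" using c by simp
      then have "v \<noteq> {}" by auto
      then obtain x where x: "x \<in> v" by blast
      have fv: "finite v" using finV[OF v] .
      have A: "v - {x} \<subseteq> ?N - {x}" "card (v - {x}) = k" using vN c1 x fv by auto
      have xN: "x \<in> ?N" using x vN by blast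
      have "f v = f (insert x (v - {x}))" using x by (simp add: insert_absorb)
      also have "\<dots> = insert (\<sigma> x) (\<sigma> ` (v - {x}))" using fins[OF xN A] fK[of "v - {x}"] A by auto
      also have "\<dots> = \<sigma> ` v" using x by blast
      finally show ?thesis .
    qed
  qed
  have "f = fsig n k \<sigma>"
  proof
    fix v show "f v = fsig n k \<sigma> v"
      using fall fext by (cases "v \<in> ?V") (auto simp: fsig_def extensional_def)
  qed
  then show ?thesis using sperm by blast
qed

definition Bnb :: "nat \<Rightarrow> nat \<Rightarrow> nat set \<Rightarrow> nat set set" where
  "Bnb n k v = {w \<in> Bverts n k. Badj v w}"

lemma Bnb_low:
  assumes v: "v \<in> Bverts n k" "card v = k"
  shows "card (Bnb n k v) = n - k"
proof -
  have vN: "v \<subseteq> {1..n}" using v by (simp add: Bverts_iff)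
  have fv: "finite v" using vN finite_subset by blast
  have eq: "Bnb n k v = (\<lambda>x. insert x v) ` ({1..n} - v)"
  proof (intro equalityI subsetI)
    fix w assume w: "w \<in> Bnb n k v"
    then have wV: "w \<in> Bverts n k" and a: "v \<subset> w \<or> w \<subset> v" by (auto simp: Bnb_def Badj_def)
    have fw: "finite w" using wV by (rule Bverts_finite)
    have "\<not> w \<subset> v"
    proof
      assume "w \<subset> v"
      then have "card w < card v" using fv psubset_card_mono by blast
      then show False using wV v by (auto simp: Bverts_iff)
    qed
    then have vw: "v \<subset> w" using a by blast
    then have cw: "card w = k + 1" using wV v fw psubset_card_mono[OF fw vw] by (auto simp: Bverts_iff)
    have "card (w - v) = card w - card v" using vw fv by (meson card_Diff_subset psubset_imp_subset)
    then have "card (w - v) = 1" using cw v by simp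
    then obtain x where x: "w - v = {x}" by (rule card_1_singletonE)
    then have "w = insert x v" using vw by blast
    moreover have "x \<in> {1..n} - v" using x wV by (auto simp: Bverts_iff)
    ultimately show "w \<in> (\<lambda>x. insert x v) ` ({1..n} - v)" by blast
  next
    fix w assume "w \<in> (\<lambda>x. insert x v) ` ({1..n} - v)"
    then obtain x where x: "x \<in> {1..n}" "x \<notin> v" "w = insert x v" by blast
    have "w \<in> Bverts n k" using x vN v fv by (auto simp: Bverts_iff)
    moreover have "v \<subset> w" using x by blast
    ultimately show "w \<in> Bnb n k v" by (simp add: Bnb_def Badj_def)
  qed
  have inj: "inj_on (\<lambda>x. insert x v) ({1..n} - v)"
    by (rule inj_onI) blast
  have "card (Bnb n k v) = card ({1..n} - v)" unfolding eq using card_image[OF inj] .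
  also have "\<dots> = n - k" using vN fv v by (simp add: card_Diff_subset)
  finally show ?thesis .
qed

lemma Bnb_high:
  assumes v: "v \<in> Bverts n k" "card v = k + 1"
  shows "card (Bnb n k v) = k + 1"
proof -
  have vN: "v \<subseteq> {1..n}" using v by (simp add: Bverts_iff)
  have fv: "finite v" using vN finite_subset by blast
  have eq: "Bnb n k v = (\<lambda>x. v - {x}) ` v"
  proof (intro equalityI subsetI)
    fix w assume w: "w \<in> Bnb n k v"
    then have wV: "w \<in> Bverts n k" and a: "v \<subset> w \<or> w \<subset> v" by (auto simp: Bnb_def Badj_def)
    have fw: "finite w" using wV by (rule Bverts_finite)
    have "\<not> v \<subset> w"
    proof
      assume "v \<subset> w"
      then have "card v < card w" using fw psubset_card_mono by blast
      then show False using wV v by (auto simp: Bverts_iff)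
    qed
    then have vw: "w \<subset> v" using a by blast
    then have cw: "card w = k" using wV v fv psubset_card_mono[OF fv vw] by (auto simp: Bverts_iff)
    have "card (v - w) = card v - card w" using vw fw by (meson card_Diff_subset psubset_imp_subset)
    then have "card (v - w) = 1" using cw v by simp
    then obtain x where x: "v - w = {x}" by (rule card_1_singletonE)
    then have "w = v - {x}" using vw by blast
    moreover have "x \<in> v" using x by blast
    ultimately show "w \<in> (\<lambda>x. v - {x}) ` v" by blast
  next
    fix w assume "w \<in> (\<lambda>x. v - {x}) ` v"
    then obtain x where x: "x \<in> v" "w = v - {x}" by blast
    have "w \<in> Bverts n k" using x vN v fv by (auto simp: Bverts_iff)
    moreover have "w \<subset> v" using x by blast
    ultimately show "w \<in> Bnb n k v" by (simp add: Bnb_def Badj_def)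
  qed
  have inj: "inj_on (\<lambda>x. v - {x}) v"
    by (rule inj_onI) blast
  show ?thesis unfolding eq using card_image[OF inj] v by simp
qed

lemma Baut_Bnb:
  assumes f: "f \<in> Baut n k" and v: "v \<in> Bverts n k"
  shows "card (Bnb n k (f v)) = card (Bnb n k v)"
proof -
  let ?V = "Bverts n k"
  have fB: "f \<in> Bij ?V" using f by (simp add: Baut_def)
  have finj: "inj_on f ?V" and fim: "f ` ?V = ?V" using fB by (auto simp: Bij_def bij_betw_def)
  have adj: "\<And>v w. v \<in> ?V \<Longrightarrow> w \<in> ?V \<Longrightarrow> Badj v w \<longleftrightarrow> Badj (f v) (f w)"
    using f by (simp add: Baut_def)
  have "f ` Bnb n k v = Bnb n k (f v)"
  proof (intro equalityI subsetI)
    fix y assume "y \<in> f ` Bnb n k v"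
    then obtain w where "w \<in> ?V" "Badj v w" "y = f w" by (auto simp: Bnb_def)
    then show "y \<in> Bnb n k (f v)" using adj[OF v] fim by (auto simp: Bnb_def)
  next
    fix y assume y: "y \<in> Bnb n k (f v)"
    then have "y \<in> f ` ?V" using fim by (simp add: Bnb_def)
    then obtain w where w: "w \<in> ?V" "y = f w" by blast
    then have "Badj v w" using adj[OF v w(1)] y by (simp add: Bnb_def)
    then show "y \<in> f ` Bnb n k v" using w by (auto simp: Bnb_def)
  qed
  moreover have "inj_on f (Bnb n k v)" using finj by (rule inj_on_subset) (auto simp: Bnb_def)
  ultimately show ?thesis using card_image by metis
qed

lemma Baut_level:
  assumes f: "f \<in> Baut n k" and nk: "n \<noteq> 2*k+1" and k: "2*k < n"
  shows "\<And>v. v \<in> Bverts n k \<Longrightarrow> card (f v) = card v"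
proof -
  fix v assume v: "v \<in> Bverts n k"
  have fv: "f v \<in> Bverts n k" using f v Bij_imp_funcset by (fastforce simp: Baut_def)
  have c1: "card v = k \<or> card v = k + 1" and c2: "card (f v) = k \<or> card (f v) = k + 1"
    using v fv by (auto simp: Bverts_iff)
  have dd: "n - k \<noteq> k + 1" using nk k by simp
  show "card (f v) = card v"
    using c1 c2 Baut_Bnb[OF f v] Bnb_low[OF v] Bnb_high[OF v] Bnb_low[OF fv] Bnb_high[OF fv] dd
    by auto
qed

lemma Badj_card: "v \<in> Bverts n k \<Longrightarrow> w \<in> Bverts n k \<Longrightarrow> Badj v w \<Longrightarrow> card v \<noteq> card w"
  unfolding Badj_def using Bverts_finite psubset_card_mono by (metis less_irrefl)

lemma Baut_swap_all:
  assumes f: "f \<in> Baut n k" and k1: "1 \<le> k" and kn: "k + 2 \<le> n"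
    and v0: "v0 \<in> Bverts n k" "card (f v0) \<noteq> card v0"
  shows "\<And>v. v \<in> Bverts n k \<Longrightarrow> card (f v) \<noteq> card v"
proof -
  let ?V = "Bverts n k"
  let ?N = "{1..n::nat}"
  have fV: "\<And>v. v \<in> ?V \<Longrightarrow> f v \<in> ?V" using f Bij_imp_funcset by (fastforce simp: Baut_def)
  have adj: "\<And>v w. v \<in> ?V \<Longrightarrow> w \<in> ?V \<Longrightarrow> Badj v w \<longleftrightarrow> Badj (f v) (f w)"
    using f by (simp add: Baut_def)
  have propg: "card (f w) \<noteq> card w" if u: "u \<in> ?V" and w: "w \<in> ?V" and a: "Badj u w" and s: "card (f u) \<noteq> card u" for u w
  proof -
    have c1: "card u \<noteq> card w" using Badj_card[OF u w a] .
    have c2: "card (f u) \<noteq> card (f w)" using Badj_card[OF fV[OF u] fV[OF w]] adj[OF u w] a by blast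
    have "card u = k \<or> card u = k + 1" "card w = k \<or> card w = k + 1"
      "card (f u) = k \<or> card (f u) = k + 1" "card (f w) = k \<or> card (f w) = k + 1"
      using u w fV[OF u] fV[OF w] by (auto simp: Bverts_iff)
    then show ?thesis using c1 c2 s by arith
  qed
  have ex: "\<exists>A0. A0 \<subseteq> ?N \<and> card A0 = k \<and> card (f A0) \<noteq> card A0"
  proof (cases "card v0 = k")
    case True then show ?thesis using v0 by (auto simp: Bverts_iff)
  next
    case False
    then have c: "card v0 = k + 1" and vN: "v0 \<subseteq> ?N" using v0 by (auto simp: Bverts_iff)
    then obtain x where x: "x \<in> v0" by (metis card.empty empty_iff Suc_eq_plus1 nat.distinct(1) subsetI subset_antisym)
    have fv: "finite v0" using Bverts_finite[OF v0(1)] .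
    have A: "v0 - {x} \<subseteq> ?N" "card (v0 - {x}) = k" using vN c x fv by auto
    have AV: "v0 - {x} \<in> ?V" using A by (auto simp: Bverts_iff)
    have "Badj v0 (v0 - {x})" using x by (auto simp: Badj_def)
    then show ?thesis using propg[OF v0(1) AV _ v0(2)] A by blast
  qed
  then obtain A0 where A0: "A0 \<subseteq> ?N" "card A0 = k" "card (f A0) \<noteq> card A0" by blast
  have allK: "card (f B) \<noteq> card B" if B: "B \<subseteq> ?N" "card B = k" for B
  proof -
    have "card B = k \<and> card (f B) \<noteq> card B"
    proof (rule swap_conn[where U="?N" and A=A0 and P="\<lambda>B. card B = k \<and> card (f B) \<noteq> card B"])
      show "finite ?N" by simp
      show "A0 \<subseteq> ?N" "B \<subseteq> ?N" "card A0 = card B" using A0 B by auto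
      show "card A0 = k \<and> card (f A0) \<noteq> card A0" using A0 by simp
      fix A a b assume P: "card A = k \<and> card (f A) \<noteq> card A" and A: "A \<subseteq> ?N"
        and a: "a \<in> A" and b: "b \<in> ?N - A"
      have fA: "finite A" using A finite_subset by blast
      have AV: "A \<in> ?V" using A P by (auto simp: Bverts_iff)
      have LV: "insert b A \<in> ?V" using A P b fA by (auto simp: Bverts_iff)
      have c': "card (insert b (A - {a})) = k" using P a b fA k1 by (simp add: card_Diff_singleton)
      have A'V: "insert b (A - {a}) \<in> ?V" using A b a c' by (auto simp: Bverts_iff)
      have "Badj A (insert b A)" using b by (auto simp: Badj_def)
      then have s1: "card (f (insert b A)) \<noteq> card (insert b A)" using propg[OF AV LV] P by blast
      have "Badj (insert b A) (insert b (A - {a}))" using a b by (auto simp: Badj_def)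
      then have "card (f (insert b (A - {a}))) \<noteq> card (insert b (A - {a}))" using propg[OF LV A'V] s1 by blast
      then show "card (insert b (A - {a})) = k \<and> card (f (insert b (A - {a}))) \<noteq> card (insert b (A - {a}))"
        using c' by simp
    qed
    then show ?thesis by simp
  qed
  fix v assume v: "v \<in> ?V"
  show "card (f v) \<noteq> card v"
  proof (cases "card v = k")
    case True then show ?thesis using allK v by (auto simp: Bverts_iff)
  next
    case False
    then have c: "card v = k + 1" and vN: "v \<subseteq> ?N" using v by (auto simp: Bverts_iff)
    then obtain x where x: "x \<in> v" by (metis card.empty empty_iff Suc_eq_plus1 nat.distinct(1) subsetI subset_antisym)
    have fv: "finite v" using Bverts_finite[OF v] .
    have A: "v - {x} \<subseteq> ?N" "card (v - {x}) = k" using vN c x fv by auto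
    have AV: "v - {x} \<in> ?V" using A by (auto simp: Bverts_iff)
    have "Badj (v - {x}) v" using x by (auto simp: Badj_def)
    then show ?thesis using propg[OF AV v _ allK[OF A]] by blast
  qed
qed

lemma Baut_group_carrier: "carrier (Baut_group n k) = Baut n k"
  by (simp add: Baut_group_def)

lemma Baut_group_mult:
  "x \<in> Baut n k \<Longrightarrow> y \<in> Baut n k \<Longrightarrow> x \<otimes>\<^bsub>Baut_group n k\<^esub> y = compose (Bverts n k) x y"
  by (simp add: Baut_group_def BijGroup_def Baut_def)

lemma fsig_comp:
  assumes "\<sigma> permutes {1..n}" "\<tau> permutes {1..n}"
  shows "compose (Bverts n k) (fsig n k \<sigma>) (fsig n k \<tau>) = fsig n k (\<sigma> \<circ> \<tau>)"
proof
  fix v show "compose (Bverts n k) (fsig n k \<sigma>) (fsig n k \<tau>) v = fsig n k (\<sigma> \<circ> \<tau>) v"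
    using fsig_mem[OF assms(2)] by (cases "v \<in> Bverts n k") (auto simp: compose_def fsig_app image_comp fsig_def)
qed

lemma compose_id_fsig: "compose (Bverts n k) (fsig n k \<sigma>) id = fsig n k \<sigma>"
  by (auto simp: compose_def fsig_def intro!: restrict_ext)

lemma Baut_ext: "f \<in> Baut n k \<Longrightarrow> f \<in> extensional (Bverts n k)"
  by (simp add: Baut_def Bij_def)

lemma Baut_fun: "f \<in> Baut n k \<Longrightarrow> v \<in> Bverts n k \<Longrightarrow> f v \<in> Bverts n k"
  using Bij_imp_funcset by (fastforce simp: Baut_def)

definition hB :: "nat \<Rightarrow> nat \<Rightarrow> (nat \<Rightarrow> nat) \<times> int \<Rightarrow> nat set \<Rightarrow> nat set" where
  "hB n k p = (if snd p = 0 then fsig n k (fst p) else compose (Bverts n k) (fsig n k (fst p)) (Balpha n k))"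

lemma hB_app:
  assumes "v \<in> Bverts n k" "n = 2*k+1"
  shows "hB n k (\<sigma>, i) v = \<sigma> ` (if i = 0 then v else {1..n} - v)"
  using assms Balpha_mem by (auto simp: hB_def fsig_app compose_def Balpha_app)

lemma hB_ext: "hB n k p \<in> extensional (Bverts n k)"
  by (simp add: hB_def fsig_def compose_def)

theorem theorem3p10:
  fixes n k :: nat
  assumes "n \<ge> 4" and "1 \<le> k" and "2 * k < n"
  shows "(n \<noteq> 2 * k + 1 \<longrightarrow>
            Baut n k = {fsig n k \<sigma> | \<sigma>. \<sigma> permutes {1..n}}
          \<and> Baut_group n k \<cong> sym_group n)
       \<and> (n = 2 * k + 1 \<longrightarrow>
            Baut n k = {compose (Bverts n k) (fsig n k \<sigma>) (((Balpha n k) ^^ i))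
                          | \<sigma> i. \<sigma> permutes {1..n} \<and> i \<in> {0, 1::nat}}
          \<and> Baut_group n k \<cong> DirProd (sym_group n) (integer_mod_group 2))"
proof (intro conjI impI)
  let ?V = "Bverts n k"
  have k1: "1 \<le> k" using assms by simp
  have kn: "k + 2 \<le> n" using assms by simp
  have kn': "k < n" using assms by simp
  have K0: "{1..k} \<in> ?V" using kn by (auto simp: Bverts_iff)
  {
    assume nk: "n \<noteq> 2 * k + 1"
    show eq1: "Baut n k = {fsig n k \<sigma> | \<sigma>. \<sigma> permutes {1..n}}"
    proof (intro equalityI subsetI)
      fix f assume f: "f \<in> Baut n k"
      show "f \<in> {fsig n k \<sigma> | \<sigma>. \<sigma> permutes {1..n}}"
        using level_pres_fsig[OF f Baut_level[OF f nk assms(3)] k1 kn] by blast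
    next
      fix f assume "f \<in> {fsig n k \<sigma> | \<sigma>. \<sigma> permutes {1..n}}"
      then show "f \<in> Baut n k" using fsig_Baut by blast
    qed
    have "fsig n k \<in> iso (sym_group n) (Baut_group n k)"
    proof -
      have hom: "fsig n k \<in> hom (sym_group n) (Baut_group n k)"
        by (rule homI) (auto simp: sym_group_carrier Baut_group_carrier sym_group_mult fsig_Baut
              Baut_group_mult fsig_comp permutes_compose)
      have inj: "inj_on (fsig n k) (carrier (sym_group n))"
      proof (rule inj_onI)
        fix \<sigma> \<tau> assume s: "\<sigma> \<in> carrier (sym_group n)" and t: "\<tau> \<in> carrier (sym_group n)"
          and e: "fsig n k \<sigma> = fsig n k \<tau>"
        show "\<sigma> = \<tau>"
          by (rule fsig_eqD[OF s[unfolded sym_group_carrier] t[unfolded sym_group_carrier] kn'])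
             (metis e fsig_app)
      qed
      have im: "fsig n k ` carrier (sym_group n) = carrier (Baut_group n k)"
        unfolding Baut_group_carrier eq1 by (auto simp: sym_group_carrier)
      show ?thesis using hom inj im by (simp add: iso_iff)
    qed
    then have "sym_group n \<cong> Baut_group n k" by (rule is_isoI)
    then show "Baut_group n k \<cong> sym_group n" by (rule group.iso_sym[OF sym_group_is_group])
  }
  {
    assume n: "n = 2 * k + 1"
    have aB: "Balpha n k \<in> Baut n k" using Balpha_Baut[OF n] .
    have aa: "\<And>v. v \<in> ?V \<Longrightarrow> Balpha n k (Balpha n k v) = v"
      using Balpha_mem[OF n] by (auto simp: Balpha_app Bverts_iff)
    have eq2: "Baut n k = {compose (Bverts n k) (fsig n k \<sigma>) (((Balpha n k) ^^ i))
                          | \<sigma> i. \<sigma> permutes {1..n} \<and> i \<in> {0, 1::nat}}"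
    proof (intro equalityI subsetI)
      fix f assume f: "f \<in> Baut n k"
      show "f \<in> {compose (Bverts n k) (fsig n k \<sigma>) (((Balpha n k) ^^ i))
                          | \<sigma> i. \<sigma> permutes {1..n} \<and> i \<in> {0, 1::nat}}"
      proof (cases "\<forall>v\<in>?V. card (f v) = card v")
        case True
        then obtain \<sigma> where s: "\<sigma> permutes {1..n}" "f = fsig n k \<sigma>"
          using level_pres_fsig[OF f _ k1 kn] by blast
        then have "f = compose (Bverts n k) (fsig n k \<sigma>) (((Balpha n k) ^^ 0))"
          by (simp add: compose_id_fsig)
        then show ?thesis using s by blast
      next
        case False
        then obtain v0 where v0: "v0 \<in> ?V" "card (f v0) \<noteq> card v0" by blast
        note sw = Baut_swap_all[OF f k1 kn v0]
        define g where "g = compose ?V f (Balpha n k)"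
        have gB: "g \<in> Baut n k" unfolding g_def by (rule compose_Baut[OF f aB])
        have glev: "card (g v) = card v" if v: "v \<in> ?V" for v
        proof -
          have av: "Balpha n k v \<in> ?V" using Balpha_mem[OF n v] v by (simp add: Balpha_app)
          have "card (f (Balpha n k v)) \<noteq> card (Balpha n k v)" using sw[OF av] .
          moreover have "card (f (Balpha n k v)) = k \<or> card (f (Balpha n k v)) = k + 1"
            using Baut_fun[OF f av] by (auto simp: Bverts_iff)
          moreover have "card (Balpha n k v) = n - card v" using v
            by (auto simp: Balpha_app Bverts_iff card_Diff_subset finite_subset)
          moreover have "card v = k \<or> card v = k + 1" using v by (auto simp: Bverts_iff)
          moreover have "g v = f (Balpha n k v)" using v by (simp add: g_def compose_def)
          ultimately show ?thesis using n by auto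
        qed
        obtain \<sigma> where s: "\<sigma> permutes {1..n}" "g = fsig n k \<sigma>"
          using level_pres_fsig[OF gB glev k1 kn] by blast
        have "f = compose ?V g (Balpha n k)"
        proof
          fix v show "f v = compose ?V g (Balpha n k) v"
          proof (cases "v \<in> ?V")
            case True
            have av: "Balpha n k v \<in> ?V" using Balpha_mem[OF n True] True by (simp add: Balpha_app)
            show ?thesis using True av aa by (simp add: compose_def g_def)
          next
            case False
            then show ?thesis using Baut_ext[OF f] by (simp add: compose_def extensional_def)
          qed
        qed
        then have "f = compose (Bverts n k) (fsig n k \<sigma>) (((Balpha n k) ^^ 1))"
          using s by simp
        then show ?thesis using s by blast
      qed
    next
      fix f assume "f \<in> {compose (Bverts n k) (fsig n k \<sigma>) (((Balpha n k) ^^ i))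
                          | \<sigma> i. \<sigma> permutes {1..n} \<and> i \<in> {0, 1::nat}}"
      then obtain \<sigma> i where s: "\<sigma> permutes {1..n}" "i \<in> {0, 1::nat}"
        and fe: "f = compose (Bverts n k) (fsig n k \<sigma>) (((Balpha n k) ^^ i))" by blast
      show "f \<in> Baut n k"
      proof (cases "i = 0")
        case True
        then show ?thesis using fe fsig_Baut[OF s(1)] by (simp add: compose_id_fsig)
      next
        case False
        then have "i = 1" using s by simp
        then show ?thesis using fe compose_Baut[OF fsig_Baut[OF s(1)] aB] by simp
      qed
    qed
    then show "Baut n k = {compose (Bverts n k) (fsig n k \<sigma>) (((Balpha n k) ^^ i))
                          | \<sigma> i. \<sigma> permutes {1..n} \<and> i \<in> {0, 1::nat}}" .
    let ?G = "DirProd (sym_group n) (integer_mod_group 2)"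
    have cG: "carrier ?G = {\<sigma>. \<sigma> permutes {1..n}} \<times> {0, 1}"
      by (auto simp: DirProd_def sym_group_carrier carrier_integer_mod_group)
    have hBin: "hB n k p \<in> Baut n k" if p: "p \<in> carrier ?G" for p
    proof -
      obtain \<sigma> i where pe: "p = (\<sigma>, i)" and s: "\<sigma> permutes {1..n}" and i: "i = 0 \<or> i = 1"
        using p cG by auto
      show ?thesis using i compose_Baut[OF fsig_Baut[OF s] aB] fsig_Baut[OF s]
        by (auto simp: pe hB_def)
    qed
    have "hB n k \<in> iso ?G (Baut_group n k)"
    proof -
      have hom: "hB n k \<in> hom ?G (Baut_group n k)"
      proof (rule homI)
        fix p assume "p \<in> carrier ?G" then show "hB n k p \<in> carrier (Baut_group n k)"
          using hBin Baut_group_carrier by simp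
      next
        fix p q assume p: "p \<in> carrier ?G" and q: "q \<in> carrier ?G"
        obtain \<sigma> i where pe: "p = (\<sigma>, i)" and s: "\<sigma> permutes {1..n}" and i: "i = 0 \<or> i = 1"
          using p cG by auto
        obtain \<tau> j where qe: "q = (\<tau>, j)" and t: "\<tau> permutes {1..n}" and j: "j = 0 \<or> j = 1"
          using q cG by auto
        have pq: "p \<otimes>\<^bsub>?G\<^esub> q = (\<sigma> \<circ> \<tau>, (i + j) mod 2)"
          by (simp add: pe qe DirProd_def sym_group_mult)
        have "hB n k (\<sigma> \<circ> \<tau>, (i + j) mod 2) = compose ?V (hB n k (\<sigma>, i)) (hB n k (\<tau>, j))"
        proof
          fix v show "hB n k (\<sigma> \<circ> \<tau>, (i + j) mod 2) v = compose ?V (hB n k (\<sigma>, i)) (hB n k (\<tau>, j)) v"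
          proof (cases "v \<in> ?V")
            case False
            then show ?thesis using hB_ext[of n k] by (simp add: compose_def extensional_def)
          next
            case True
            have vN: "v \<subseteq> {1..n}" using True by (simp add: Bverts_iff)
            have cv: "{1..n} - v \<in> ?V" using Balpha_mem[OF n True] .
            have tv: "\<tau> ` v \<in> ?V" using fsig_mem[OF t True] .
            have tcv: "\<tau> ` ({1..n} - v) \<in> ?V" using fsig_mem[OF t cv] .
            have cc: "{1..n} - ({1..n} - v) = v" using vN by blast
            have pc: "\<tau> ` ({1..n} - v) = {1..n} - \<tau> ` v" using perm_image_compl[OF t vN] .
            have tvN: "\<tau> ` v \<subseteq> {1..n}" using tv by (simp add: Bverts_iff)
            have cc2: "{1..n} - ({1..n} - \<tau> ` v) = \<tau> ` v" using tvN by blast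
            have R: "compose ?V (hB n k (\<sigma>, i)) (hB n k (\<tau>, j)) v = hB n k (\<sigma>, i) (hB n k (\<tau>, j) v)"
              using True by (simp add: compose_def)
            have Hj: "hB n k (\<tau>, j) v = \<tau> ` (if j = 0 then v else {1..n} - v)" by (rule hB_app[OF True n])
            have mm: "\<tau> ` (if j = 0 then v else {1..n} - v) \<in> ?V" using tv tcv by simp
            have Hi: "hB n k (\<sigma>, i) (\<tau> ` (if j = 0 then v else {1..n} - v)) =
              \<sigma> ` (if i = 0 then \<tau> ` (if j = 0 then v else {1..n} - v) else {1..n} - \<tau> ` (if j = 0 then v else {1..n} - v))"
              by (rule hB_app[OF mm n])
            have L: "hB n k (\<sigma> \<circ> \<tau>, (i + j) mod 2) v = (\<sigma> \<circ> \<tau>) ` (if (i + j) mod 2 = 0 then v else {1..n} - v)"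
              by (rule hB_app[OF True n])
            have "hB n k (\<sigma> \<circ> \<tau>, (i + j) mod 2) v = hB n k (\<sigma>, i) (hB n k (\<tau>, j) v)"
              using i j
            proof (elim disjE)
              assume "i = 0" "j = 0" then show ?thesis using L Hj Hi by (simp add: image_comp)
            next
              assume "i = 0" "j = 1" then show ?thesis using L Hj Hi by (simp add: image_comp)
            next
              assume "i = 1" "j = 0" moreover have "(\<sigma> \<circ> \<tau>) ` ({1..n} - v) = \<sigma> ` ({1..n} - \<tau> ` v)"
                by (simp only: image_comp[symmetric] pc)
              ultimately show ?thesis using L Hj Hi by simp
            next
              assume "i = 1" "j = 1" moreover have "(\<sigma> \<circ> \<tau>) ` v = \<sigma> ` ({1..n} - \<tau> ` ({1..n} - v))"
                by (simp only: image_comp[symmetric] pc cc2)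
              ultimately show ?thesis using L Hj Hi by simp
            qed
            then show ?thesis using R by simp
          qed
        qed
        then show "hB n k (p \<otimes>\<^bsub>?G\<^esub> q) = hB n k p \<otimes>\<^bsub>Baut_group n k\<^esub> hB n k q"
          using pq Baut_group_mult[OF hBin[OF p] hBin[OF q]] pe qe by simp
      qed
      have inj: "inj_on (hB n k) (carrier ?G)"
      proof (rule inj_onI)
        fix p q assume p: "p \<in> carrier ?G" and q: "q \<in> carrier ?G" and e: "hB n k p = hB n k q"
        obtain \<sigma> i where pe: "p = (\<sigma>, i)" and s: "\<sigma> permutes {1..n}" and i: "i = 0 \<or> i = 1"
          using p cG by auto
        obtain \<tau> j where qe: "q = (\<tau>, j)" and t: "\<tau> permutes {1..n}" and j: "j = 0 \<or> j = 1"
          using q cG by auto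
        have ck: "card (hB n k (\<rho>, l) {1..k}) = (if l = 0 then k else k + 1)"
          if r: "\<rho> permutes {1..n}" for \<rho> l
        proof -
          have "card ({1..n} - {1..k}) = k + 1" using n kn by (simp add: card_Diff_subset)
          then show ?thesis using hB_app[OF K0 n] perm_card[OF r] by simp
        qed
        have ij: "i = j"
        proof -
          have "card (hB n k (\<sigma>, i) {1..k}) = card (hB n k (\<tau>, j) {1..k})" using e pe qe by simp
          then show ?thesis using ck[OF s, of i] ck[OF t, of j] i j by auto
        qed
        have "\<sigma> = \<tau>"
        proof (rule fsig_eqD[OF s t kn'])
          fix v assume v: "v \<in> ?V"
          have cv: "{1..n} - v \<in> ?V" using Balpha_mem[OF n v] .
          have cc: "{1..n} - ({1..n} - v) = v" using v by (auto simp: Bverts_iff)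
          show "\<sigma> ` v = \<tau> ` v"
          proof (cases "i = 0")
            case True
            then show ?thesis using e pe qe ij hB_app[OF v n] by (metis)
          next
            case False
            have "hB n k (\<sigma>, i) ({1..n} - v) = hB n k (\<tau>, j) ({1..n} - v)" using e pe qe by simp
            then show ?thesis using False ij hB_app[OF cv n] cc by simp
          qed
        qed
        then show "p = q" using pe qe ij by simp
      qed
      have im: "hB n k ` carrier ?G = carrier (Baut_group n k)"
      proof (intro equalityI subsetI)
        fix f assume "f \<in> hB n k ` carrier ?G"
        then show "f \<in> carrier (Baut_group n k)" using hBin Baut_group_carrier by auto
      next
        fix f assume "f \<in> carrier (Baut_group n k)"
        then have "f \<in> Baut n k" by (simp add: Baut_group_carrier)
        then obtain \<sigma> i where s: "\<sigma> permutes {1..n}" "i \<in> {0, 1::nat}"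
          and fe: "f = compose (Bverts n k) (fsig n k \<sigma>) (((Balpha n k) ^^ i))" using eq2 by blast
        show "f \<in> hB n k ` carrier ?G"
        proof (cases "i = 0")
          case True
          then have "f = hB n k (\<sigma>, 0)" using fe by (simp add: hB_def compose_id_fsig)
          moreover have "(\<sigma>, 0) \<in> carrier ?G" using cG s by simp
          ultimately show ?thesis by blast
        next
          case False
          then have "f = hB n k (\<sigma>, 1)" using fe s by (simp add: hB_def)
          moreover have "(\<sigma>, 1) \<in> carrier ?G" using cG s by simp
          ultimately show ?thesis by blast
        qed
      qed
      show ?thesis using hom inj im by (simp add: iso_iff)
    qed
    then have "?G \<cong> Baut_group n k" by (rule is_isoI)
    then show "Baut_group n k \<cong> ?G"
      by (rule group.iso_sym[OF DirProd_group[OF sym_group_is_group group_integer_mod_group]])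
  }
qed

end
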